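(* Let $\rho$ be $\mathfrak L$-regular, fix $G>0$ and $r\in(0,1)$, and suppose $g\in[0,G]$, $t=g/(K\log K)$. There exists $C=C(r,G)>0$ (also depending on $\mathfrak L$) such that the following holds. For all $E_1,E_2\in\mathbb R$, integers $K\ge2$ and $j\in\{1,\dots,K-1\}$, let $X_1,\dots,X_{K-1}$ be independent random variables, where $X_i$ has density $p_{E_1}$ for $i\le j$ and density $p_{E_2}$ for $i>j$, and set $Q=\sum_{i=1}^{K-1}X_i$. Then for every $A>0$, $$\mathbb P(|Q|\ge A)\le\frac{CK}{r\,A^{1-r}}.$$
   Context: A probability density $p:\mathbb R\to[0,\infty)$ is $\mathfrak L$-regular ($\mathfrak L>0$) if: (i) $p(x)\le\mathfrak L(1+x^2)^{-1}$ for all $x$; (ii) $p(x)\ge\mathfrak L^{-1}$ for all $x\in[-\mathfrak L^{-1},\mathfrak L^{-1}]$; (iii) $p'$ exists everywhere and $|p'(x)|\le\mathfrak L(1+|x|)^{-1-1/\mathfrak L}$ for all $x$; (iv) for every $v>0$, $\inf_{|x|<v}p(x)>0$; (v) $p'(x)=0$ for only finitely many $x$. $V_0$ denotes a random variable with density $\rho$. Self-energy densities: for $E\in\mathbb R$, $p_E$ is the density of a fixed (arbitrarily chosen) real-valued solution $\Gamma$ of the distributional equation $\Gamma\overset{d}{=}\big(V_0-E-t^2\sum_{i=1}^K\Gamma_i\big)^{-1}$, where $\Gamma_1,\dots,\Gamma_K$ are i.i.d. copies of $\Gamma$ independent of $V_0$. *)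

theory Defs
  imports "HOL-Probability.Probability"
begin

definition prob_density :: "(real \<Rightarrow> real) \<Rightarrow> bool" where
  "prob_density p \<longleftrightarrow> p \<in> borel_measurable borel \<and> (\<forall>x. 0 \<le> p x)
     \<and> (\<integral>\<^sup>+ x. ennreal (p x) \<partial>lborel) = 1"

definition L_regular :: "real \<Rightarrow> (real \<Rightarrow> real) \<Rightarrow> bool" where
  "L_regular L p \<longleftrightarrow>
     (\<forall>x. p x \<le> L / (1 + x^2)) \<and>
     (\<forall>x. \<bar>x\<bar> \<le> 1 / L \<longrightarrow> p x \<ge> 1 / L) \<and>
     (\<forall>x. p differentiable (at x)) \<and>
     (\<forall>x. \<bar>deriv p x\<bar> \<le> L * (1 + \<bar>x\<bar>) powr (-1 - 1 / L)) \<and>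
     (\<forall>v>0. (INF x\<in>{x. \<bar>x\<bar> < v}. p x) > 0) \<and>
     finite {x. deriv p x = 0}"

text \<open>The law mu of Gamma solves Gamma =d (V0 - E - t^2 (Gamma_1+...+Gamma_K))^(-1),
  with V0 of density rho and Gamma_i i.i.d. copies of Gamma independent of V0.\<close>
definition self_energy_eq ::
  "(real \<Rightarrow> real) \<Rightarrow> nat \<Rightarrow> real \<Rightarrow> real \<Rightarrow> real measure \<Rightarrow> bool" where
  "self_energy_eq \<rho> K t E \<mu> \<longleftrightarrow>
     distr (density lborel (\<lambda>x. ennreal (\<rho> x)) \<Otimes>\<^sub>M (\<Pi>\<^sub>M i\<in>{1..K}. \<mu>)) lborel
       (\<lambda>(v, \<gamma>). inverse (v - E - t^2 * (\<Sum>i=1..K. \<gamma> i))) = \<mu>"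

definition self_energy_density ::
  "(real \<Rightarrow> real) \<Rightarrow> nat \<Rightarrow> real \<Rightarrow> real \<Rightarrow> (real \<Rightarrow> real) \<Rightarrow> bool" where
  "self_energy_density \<rho> K t E p \<longleftrightarrow>
     prob_density p \<and> self_energy_eq \<rho> K t E (density lborel (\<lambda>x. ennreal (p x)))"

end

theory Submission
  imports Defs
begin

lemma powr_subadd:
  fixes a b s :: real
  assumes "0 \<le> a" "0 \<le> b" "0 < s" "s \<le> 1"
  shows "(a + b) powr s \<le> a powr s + b powr s"
proof (cases "a + b = 0")
  case True then show ?thesis using assms by simp
next
  case False
  then have ab: "a + b > 0" using assms by simp
  have ha: "a / (a+b) \<le> (a/(a+b)) powr s"
  proof -
    have "(a/(a+b)) powr 1 \<le> (a/(a+b)) powr s"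
      using assms ab by (intro powr_mono') (auto simp: divide_le_eq_1)
    then show ?thesis using assms ab by simp
  qed
  have hb: "b / (a+b) \<le> (b/(a+b)) powr s"
  proof -
    have "(b/(a+b)) powr 1 \<le> (b/(a+b)) powr s"
      using assms ab by (intro powr_mono') (auto simp: divide_le_eq_1)
    then show ?thesis using assms ab by simp
  qed
  have "1 \<le> (a/(a+b)) powr s + (b/(a+b)) powr s"
  proof -
    have "a/(a+b) + b/(a+b) = 1" using ab by (simp add: add_divide_distrib[symmetric])
    then show ?thesis using ha hb by linarith
  qed
  also have "\<dots> = (a powr s + b powr s) / (a+b) powr s"
    using assms ab by (simp add: powr_divide add_divide_distrib)
  finally show ?thesis using ab by (simp add: le_divide_eq)
qed

lemma powr_sum_subadd:
  fixes x :: "nat \<Rightarrow> real" and s :: real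
  assumes "0 < s" "s \<le> 1"
  shows "\<bar>\<Sum>i\<in>I. x i\<bar> powr s \<le> (\<Sum>i\<in>I. \<bar>x i\<bar> powr s)"
proof (induction I rule: infinite_finite_induct)
  case (insert i I)
  have "\<bar>\<Sum>i\<in>insert i I. x i\<bar> powr s = \<bar>x i + (\<Sum>i\<in>I. x i)\<bar> powr s" using insert by simp
  also have "\<dots> \<le> (\<bar>x i\<bar> + \<bar>\<Sum>i\<in>I. x i\<bar>) powr s"
    using assms by (intro powr_mono2) auto
  also have "\<dots> \<le> \<bar>x i\<bar> powr s + \<bar>\<Sum>i\<in>I. x i\<bar> powr s"
    using assms by (intro powr_subadd) auto
  also have "\<dots> \<le> \<bar>x i\<bar> powr s + (\<Sum>i\<in>I. \<bar>x i\<bar> powr s)" using insert by simp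
  finally show ?case using insert by simp
qed simp_all

lemma int_abs_powr:
  fixes s :: real assumes "0 < s" "s < 1"
  shows "((\<lambda>x. \<bar>x\<bar> powr (-s)) has_integral (2 / (1 - s))) {-1..1}"
proof -
  have h0: "((\<lambda>x. x powr (-s)) has_integral (1 / (1 - s))) {0..1}"
    using has_integral_powr_from_0[of "-s" 1] assms by simp
  have h1: "((\<lambda>x. \<bar>x\<bar> powr (-s)) has_integral (1 / (1 - s))) {0..1}"
    by (rule has_integral_eq[OF _ h0]) auto
  have h2: "((\<lambda>x. \<bar>x\<bar> powr (-s)) has_integral (1 / (1 - s))) {-1..0}"
  proof -
    have "((\<lambda>x. (\<lambda>x. \<bar>x\<bar> powr (-s)) (-x)) has_integral (1 / (1 - s))) {-1..-0}"
      using h1 has_integral_reflect_real[of "\<lambda>x. \<bar>x\<bar> powr (-s)" "1/(1-s)" 1 0] by blast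
    then show ?thesis by simp
  qed
  have "((\<lambda>x. \<bar>x\<bar> powr (-s)) has_integral (1 / (1 - s) + 1/(1-s))) {-1..1}"
    by (rule has_integral_combine[OF _ _ h2 h1]) auto
  then show ?thesis by simp
qed

lemma nn_int_abs_powr:
  fixes s :: real assumes "0 < s" "s < 1"
  shows "(\<integral>\<^sup>+x. ennreal (indicator {-1..1} x * \<bar>x\<bar> powr (-s)) \<partial>lborel) = ennreal (2 / (1 - s))"
proof (rule nn_integral_has_integral_lborel)
  show "((\<lambda>x. indicator {-1..1} x * \<bar>x\<bar> powr (-s)) has_integral 2 / (1 - s)) UNIV"
  proof -
    have e: "(\<lambda>x. indicator {-1..1} x * \<bar>x\<bar> powr (-s)) = (\<lambda>x. if x \<in> {-1..1::real} then \<bar>x\<bar> powr (-s) else 0)"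
      by (auto simp: indicator_def)
    show ?thesis unfolding e has_integral_restrict_UNIV by (rule int_abs_powr[OF assms])
  qed
qed auto

lemma pw_bound:
  fixes \<rho> :: "real \<Rightarrow> real"
  assumes "\<forall>x. 0 \<le> \<rho> x" "\<forall>x. \<rho> x \<le> L" "0 < s" "s < 1"
  shows "\<rho> v * \<bar>inverse (v - c)\<bar> powr s \<le> \<rho> v + L * (indicator {-1..1} (v - c) * \<bar>v - c\<bar> powr (-s))"
proof (cases "\<bar>v - c\<bar> \<ge> 1")
  case True
  have "\<bar>inverse (v - c)\<bar> powr s \<le> 1"
    using True assms by (intro powr_le1) (auto simp: abs_inverse inverse_le_1_iff)
  then have "\<rho> v * \<bar>inverse (v - c)\<bar> powr s \<le> \<rho> v"
    using assms by (simp add: mult_left_le)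
  moreover have "0 \<le> L * (indicator {-1..1} (v - c) * \<bar>v - c\<bar> powr (-s))"
    using assms(1,2) by (metis indicator_pos_le mult_nonneg_nonneg order.trans powr_ge_zero)
  ultimately show ?thesis by linarith
next
  case False
  show ?thesis
  proof (cases "v = c")
    case True then show ?thesis using assms by simp
  next
    case ne: False
    have ind: "indicator {-1..1} (v - c) = (1::real)" using False by (auto simp: indicator_def)
    have g: "\<bar>inverse (v - c)\<bar> powr s = \<bar>v - c\<bar> powr (-s)"
      using ne by (simp add: abs_inverse powr_minus inverse_powr)
    have "\<rho> v * \<bar>v - c\<bar> powr (-s) \<le> L * \<bar>v - c\<bar> powr (-s)"
      using assms by (intro mult_right_mono) auto
    moreover have "0 \<le> \<rho> v" using assms(1) by simp
    ultimately show ?thesis unfolding g ind by linarith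
  qed
qed

lemma tail_int:
  fixes \<rho> :: "real \<Rightarrow> real"
  assumes "prob_density \<rho>" "\<forall>x. \<rho> x \<le> L" "0 < s" "s < 1"
  shows "(\<integral>\<^sup>+v. ennreal (\<rho> v * \<bar>inverse (v - c)\<bar> powr s) \<partial>lborel) \<le> ennreal (1 + 2 * L / (1 - s))"
proof -
  have rm[measurable]: "\<rho> \<in> borel_measurable borel" and nn: "\<forall>x. 0 \<le> \<rho> x"
    and one: "(\<integral>\<^sup>+ x. ennreal (\<rho> x) \<partial>lborel) = 1"
    using assms(1) unfolding prob_density_def by auto
  have L0: "0 \<le> L" using nn assms(2) by (meson order.trans)
  define h where "h = (\<lambda>x::real. indicator {-1..1} x * \<bar>x\<bar> powr (-s))"
  have hm[measurable]: "h \<in> borel_measurable borel" unfolding h_def by measurable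
  have h0: "0 \<le> h x" for x unfolding h_def by simp
  have "(\<integral>\<^sup>+v. ennreal (\<rho> v * \<bar>inverse (v - c)\<bar> powr s) \<partial>lborel)
      \<le> (\<integral>\<^sup>+v. ennreal (\<rho> v) + ennreal L * ennreal (h (v - c)) \<partial>lborel)"
  proof (rule nn_integral_mono)
    fix v
    have "\<rho> v * \<bar>inverse (v - c)\<bar> powr s \<le> \<rho> v + L * h (v - c)"
      unfolding h_def using pw_bound[OF nn assms(2-4)] .
    then show "ennreal (\<rho> v * \<bar>inverse (v - c)\<bar> powr s) \<le> ennreal (\<rho> v) + ennreal L * ennreal (h (v - c))"
      using nn L0 h0 by (simp add: ennreal_plus[symmetric] ennreal_mult[symmetric] del: ennreal_plus)
  qed
  also have "\<dots> = 1 + ennreal L * (\<integral>\<^sup>+v. ennreal (h (v - c)) \<partial>lborel)"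
    by (subst nn_integral_add) (auto simp: one nn_integral_cmult)
  also have "(\<integral>\<^sup>+v. ennreal (h (v - c)) \<partial>lborel) = (\<integral>\<^sup>+v. ennreal (h v) \<partial>lborel)"
    using nn_integral_real_affine[of "\<lambda>x. ennreal (h x)" 1 "-c"] by simp
  also have "\<dots> = ennreal (2 / (1 - s))"
    unfolding h_def using nn_int_abs_powr[OF assms(3,4)] .
  also have "1 + ennreal L * ennreal (2 / (1 - s)) = ennreal (1 + 2 * L / (1 - s))"
    using L0 assms by (simp add: ennreal_mult[symmetric] mult.commute ennreal_plus)
  finally show ?thesis .
qed

lemma prob_space_dens:
  assumes "prob_density p" shows "prob_space (density lborel (\<lambda>x. ennreal (p x)))"
  using assms unfolding prob_density_def
  by (intro prob_spaceI) (auto simp: emeasure_density)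

lemma moment_p:
  fixes \<rho> p :: "real \<Rightarrow> real"
  assumes "prob_density \<rho>" "\<forall>x. \<rho> x \<le> L" "0 < s" "s < 1" "self_energy_density \<rho> K t E p"
  shows "(\<integral>\<^sup>+y. ennreal (p y * \<bar>y\<bar> powr s) \<partial>lborel) \<le> ennreal (1 + 2 * L / (1 - s))"
proof -
  define \<mu> where "\<mu> = density lborel (\<lambda>x. ennreal (p x))"
  define \<nu> where "\<nu> = density lborel (\<lambda>x. ennreal (\<rho> x))"
  define P where "P = (\<Pi>\<^sub>M i\<in>{1..K}. \<mu>)"
  define f where "f = (\<lambda>(v::real, \<gamma>::nat \<Rightarrow> real). inverse (v - E - t^2 * (\<Sum>i=1..K. \<gamma> i)))"
  define B where "B = 1 + 2 * L / (1 - s)"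
  have pd: "prob_density p" and eq: "distr (\<nu> \<Otimes>\<^sub>M P) lborel f = \<mu>"
    using assms(5) unfolding self_energy_density_def self_energy_eq_def \<mu>_def \<nu>_def P_def f_def by auto
  have pm[measurable]: "p \<in> borel_measurable borel" and pnn: "\<forall>x. 0 \<le> p x"
    using pd unfolding prob_density_def by auto
  have rm[measurable]: "\<rho> \<in> borel_measurable borel" and rnn: "\<forall>x. 0 \<le> \<rho> x"
    using assms(1) unfolding prob_density_def by auto
  interpret mu: prob_space \<mu> unfolding \<mu>_def by (rule prob_space_dens[OF pd])
  interpret nu: prob_space \<nu> unfolding \<nu>_def by (rule prob_space_dens[OF assms(1)])
  interpret P: prob_space P unfolding P_def by (rule prob_space_PiM) (rule mu.prob_space_axioms)
  interpret pair_sigma_finite \<nu> P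
    by (intro pair_sigma_finite.intro) (simp_all add: nu.sigma_finite_measure_axioms P.sigma_finite_measure_axioms)
  have snu[simp]: "sets \<nu> = sets borel" unfolding \<nu>_def by simp
  have smu[simp]: "sets \<mu> = sets borel" unfolding \<mu>_def by simp
  have fm[measurable]: "f \<in> borel_measurable (\<nu> \<Otimes>\<^sub>M P)"
  proof -
    have c: "(\<lambda>z. snd z i) \<in> borel_measurable (\<nu> \<Otimes>\<^sub>M P)" if "i \<in> {1..K}" for i
    proof -
      have "(\<lambda>z. snd z i) \<in> (\<nu> \<Otimes>\<^sub>M P) \<rightarrow>\<^sub>M \<mu>"
        unfolding P_def
        by (rule measurable_compose[OF measurable_snd measurable_component_singleton]) (use that in auto)
      then show ?thesis using measurable_cong_sets[OF refl smu] by blast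
    qed
    have S: "(\<lambda>z. \<Sum>i=1..K. snd z i) \<in> borel_measurable (\<nu> \<Otimes>\<^sub>M P)"
      by (rule borel_measurable_sum) (rule c)
    have F: "(\<lambda>z. fst z) \<in> borel_measurable (\<nu> \<Otimes>\<^sub>M P)"
      by (rule measurable_compose[OF measurable_fst]) (simp add: \<nu>_def)
    have "(\<lambda>z. inverse (fst z - E - t^2 * (\<Sum>i=1..K. snd z i))) \<in> borel_measurable (\<nu> \<Otimes>\<^sub>M P)"
      using S F by measurable
    moreover have "f = (\<lambda>z. inverse (fst z - E - t^2 * (\<Sum>i=1..K. snd z i)))"
      unfolding f_def by (auto simp: fun_eq_iff)
    ultimately show ?thesis by simp
  qed
  have "(\<integral>\<^sup>+y. ennreal (p y * \<bar>y\<bar> powr s) \<partial>lborel) = (\<integral>\<^sup>+y. ennreal (\<bar>y\<bar> powr s) \<partial>\<mu>)"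
    unfolding \<mu>_def using pnn by (subst nn_integral_density) (auto simp: ennreal_mult)
  also have "\<dots> = (\<integral>\<^sup>+z. ennreal (\<bar>f z\<bar> powr s) \<partial>(\<nu> \<Otimes>\<^sub>M P))"
    unfolding eq[symmetric] by (subst nn_integral_distr) auto
  also have "\<dots> = (\<integral>\<^sup>+\<gamma>. (\<integral>\<^sup>+v. ennreal (\<bar>f (v, \<gamma>)\<bar> powr s) \<partial>\<nu>) \<partial>P)"
    by (rule nn_integral_snd[symmetric]) measurable
  also have "\<dots> \<le> (\<integral>\<^sup>+\<gamma>. ennreal B \<partial>P)"
  proof (rule nn_integral_mono)
    fix \<gamma> :: "nat \<Rightarrow> real"
    have "(\<integral>\<^sup>+v. ennreal (\<bar>f (v, \<gamma>)\<bar> powr s) \<partial>\<nu>)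
        = (\<integral>\<^sup>+v. ennreal (\<rho> v * \<bar>inverse (v - (E + t^2 * (\<Sum>i=1..K. \<gamma> i)))\<bar> powr s) \<partial>lborel)"
      unfolding \<nu>_def using rnn by (subst nn_integral_density) (auto simp: ennreal_mult f_def diff_diff_eq)
    also have "\<dots> \<le> ennreal B" unfolding B_def by (rule tail_int[OF assms(1-4)])
    finally show "(\<integral>\<^sup>+v. ennreal (\<bar>f (v, \<gamma>)\<bar> powr s) \<partial>\<nu>) \<le> ennreal B" .
  qed
  also have "\<dots> = ennreal B" by (simp add: P.emeasure_space_1)
  finally show ?thesis unfolding B_def .
qed

lemma moment_X:
  fixes \<rho> q :: "real \<Rightarrow> real" and Y :: "'a \<Rightarrow> real"
  assumes "prob_density \<rho>" "\<forall>x. \<rho> x \<le> L" "0 < s" "s < 1" "self_energy_density \<rho> K t E q"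
    and D: "distributed M lborel Y (\<lambda>x. ennreal (q x))"
  shows "(\<integral>\<^sup>+\<omega>. ennreal (\<bar>Y \<omega>\<bar> powr s) \<partial>M) \<le> ennreal (1 + 2 * L / (1 - s))"
proof -
  have pd: "prob_density q" using assms(5) unfolding self_energy_density_def by auto
  have qm[measurable]: "q \<in> borel_measurable borel" and qnn: "\<forall>x. 0 \<le> q x"
    using pd unfolding prob_density_def by auto
  have Ym: "Y \<in> measurable M lborel" and Deq: "distr M lborel Y = density lborel (\<lambda>x. ennreal (q x))"
    using D unfolding distributed_def by auto
  have "(\<integral>\<^sup>+\<omega>. ennreal (\<bar>Y \<omega>\<bar> powr s) \<partial>M) = (\<integral>\<^sup>+y. ennreal (\<bar>y\<bar> powr s) \<partial>distr M lborel Y)"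
    using Ym by (subst nn_integral_distr) auto
  also have "\<dots> = (\<integral>\<^sup>+y. ennreal (q y * \<bar>y\<bar> powr s) \<partial>lborel)"
    unfolding Deq using qnn by (subst nn_integral_density) (auto simp: ennreal_mult)
  also have "\<dots> \<le> ennreal (1 + 2 * L / (1 - s))" by (rule moment_p[OF assms(1-5)])
  finally show ?thesis .
qed

theorem lemma6p1:
  fixes L G r :: real and \<rho> :: "real \<Rightarrow> real"
  assumes "L > 0" and "prob_density \<rho>" and "L_regular L \<rho>"
    and "G > 0" and "0 < r" and "r < 1"
  shows "\<exists>C>0. \<forall>(g::real) (K::nat) (p::real \<Rightarrow> real \<Rightarrow> real) (E1::real) (E2::real) (j::nat)
      (A::real) (M::'a measure) (X::nat \<Rightarrow> 'a \<Rightarrow> real).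
      0 \<le> g \<longrightarrow> g \<le> G \<longrightarrow> K \<ge> 2 \<longrightarrow>
      (\<forall>E. self_energy_density \<rho> K (g / (real K * ln (real K))) E (p E)) \<longrightarrow>
      1 \<le> j \<longrightarrow> j \<le> K - 1 \<longrightarrow> A > 0 \<longrightarrow>
      prob_space M \<longrightarrow>
      prob_space.indep_vars M (\<lambda>_. borel) X {1..K-1} \<longrightarrow>
      (\<forall>i\<in>{1..K-1}. distributed M lborel (X i)
          (\<lambda>x. ennreal (p (if i \<le> j then E1 else E2) x))) \<longrightarrow>
      measure M {\<omega>\<in>space M. \<bar>\<Sum>i=1..K-1. X i \<omega>\<bar> \<ge> A}
        \<le> C * real K / (r * A powr (1 - r))"
proof (rule exI[of _ "1 + 2 * L"], intro conjI allI impI)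
  show "0 < 1 + 2 * L" using assms(1) by simp
  fix g :: real and K :: nat and p :: "real \<Rightarrow> real \<Rightarrow> real" and E1 E2 :: real and j :: nat
    and A :: real and M :: "'a measure" and X :: "nat \<Rightarrow> 'a \<Rightarrow> real"
  assume K2: "K \<ge> 2" and sed: "\<forall>E. self_energy_density \<rho> K (g / (real K * ln (real K))) E (p E)"
    and A0: "A > 0" and PS: "prob_space M"
    and dist: "\<forall>i\<in>{1..K-1}. distributed M lborel (X i) (\<lambda>x. ennreal (p (if i \<le> j then E1 else E2) x))"
  interpret prob_space M by (rule PS)
  define s where "s = 1 - r"
  define B where "B = 1 + 2 * L / (1 - s)"
  define I where "I = {1..K-1}"
  have s0: "0 < s" "s < 1" using assms(5,6) unfolding s_def by auto
  have rhoL: "\<forall>x. \<rho> x \<le> L"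
  proof
    fix x
    have "\<rho> x \<le> L / (1 + x^2)" using assms(3) unfolding L_regular_def by auto
    also have "\<dots> \<le> L"
    proof -
      have "1 \<le> 1 + x^2" by simp
      then have "L * 1 \<le> L * (1 + x^2)" using assms(1) by (intro mult_left_mono) auto
      moreover have "0 < 1 + x^2" by (simp add: add_pos_nonneg)
      ultimately show ?thesis by (simp add: divide_le_eq)
    qed
    finally show "\<rho> x \<le> L" .
  qed
  have mom: "(\<integral>\<^sup>+\<omega>. ennreal (\<bar>X i \<omega>\<bar> powr s) \<partial>M) \<le> ennreal B" if "i \<in> I" for i
    unfolding B_def
    using moment_X[OF assms(2) rhoL s0 sed[rule_format] dist[rule_format]] that unfolding I_def by blast
  have Xm[measurable]: "X i \<in> borel_measurable M" if "i \<in> I" for i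
    using dist that unfolding I_def distributed_def by auto
  have Qm: "(\<lambda>\<omega>. \<Sum>i\<in>I. X i \<omega>) \<in> borel_measurable M"
    by (rule borel_measurable_sum) (rule Xm)
  define S where "S = {\<omega>\<in>space M. \<bar>\<Sum>i\<in>I. X i \<omega>\<bar> \<ge> A}"
  have Sm: "S \<in> sets M" unfolding S_def using Qm by measurable
  have "ennreal (A powr s) * emeasure M S = (\<integral>\<^sup>+\<omega>. ennreal (A powr s) * indicator S \<omega> \<partial>M)"
    using Sm by (simp add: nn_integral_cmult_indicator)
  also have "\<dots> \<le> (\<integral>\<^sup>+\<omega>. (\<Sum>i\<in>I. ennreal (\<bar>X i \<omega>\<bar> powr s)) \<partial>M)"
  proof (rule nn_integral_mono)
    fix \<omega> assume "\<omega> \<in> space M"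
    have "A powr s * indicator S \<omega> \<le> (\<Sum>i\<in>I. \<bar>X i \<omega>\<bar> powr s)"
    proof (cases "\<omega> \<in> S")
      case True
      then have "A \<le> \<bar>\<Sum>i\<in>I. X i \<omega>\<bar>" unfolding S_def by auto
      then have "A powr s \<le> \<bar>\<Sum>i\<in>I. X i \<omega>\<bar> powr s" using A0 s0 by (intro powr_mono2) auto
      also have "\<dots> \<le> (\<Sum>i\<in>I. \<bar>X i \<omega>\<bar> powr s)" using s0 by (intro powr_sum_subadd) auto
      finally show ?thesis using True by simp
    next
      case False then show ?thesis by (simp add: sum_nonneg)
    qed
    then show "ennreal (A powr s) * indicator S \<omega> \<le> (\<Sum>i\<in>I. ennreal (\<bar>X i \<omega>\<bar> powr s))"
      by (cases "\<omega> \<in> S") (auto intro!: ennreal_leI)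
  qed
  also have "\<dots> = (\<Sum>i\<in>I. \<integral>\<^sup>+\<omega>. ennreal (\<bar>X i \<omega>\<bar> powr s) \<partial>M)"
    by (rule nn_integral_sum) (use Xm in measurable)
  also have "\<dots> \<le> (\<Sum>i\<in>I. ennreal B)" by (rule sum_mono) (rule mom)
  also have "\<dots> = ennreal (real (K - 1) * B)"
    using s0 assms(1) unfolding I_def B_def by (simp add: ennreal_mult' ennreal_of_nat_eq_real_of_nat)
  finally have le: "ennreal (A powr s) * emeasure M S \<le> ennreal (real (K - 1) * B)" .
  have "ennreal (A powr s * measure M S) \<le> ennreal (real (K - 1) * B)"
    using le by (simp add: emeasure_eq_measure ennreal_mult'')
  then have le2: "A powr s * measure M S \<le> real (K - 1) * B"
    using s0 assms(1) unfolding B_def by (subst (asm) ennreal_le_iff) (auto intro!: mult_nonneg_nonneg)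
  have Apos: "A powr s > 0" using A0 by simp
  have "measure M S \<le> real (K - 1) * B / A powr s" using le2 Apos by (simp add: le_divide_eq mult.commute)
  also have "\<dots> \<le> (1 + 2 * L) * real K / (r * A powr (1 - r))"
  proof -
    have "real (K - 1) * B \<le> (1 + 2 * L) * real K / r"
    proof -
      have "B = (r + 2 * L) / r" unfolding B_def s_def using assms(5) by (simp add: field_simps)
      also have "\<dots> \<le> (1 + 2 * L) / r" using assms(5,6) by (intro divide_right_mono) auto
      finally have "B \<le> (1 + 2 * L) / r" .
      moreover have "real (K - 1) \<le> real K" by simp
      moreover have "0 \<le> B" unfolding B_def s_def using assms(1,5) by simp
      ultimately have "real (K - 1) * B \<le> real K * ((1 + 2 * L) / r)"
        by (intro mult_mono) auto
      then show ?thesis by (simp add: mult.commute)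
    qed
    then have "real (K - 1) * B / A powr s \<le> ((1 + 2 * L) * real K / r) / A powr s"
      using Apos by (intro divide_right_mono) auto
    then show ?thesis unfolding s_def by (simp add: divide_divide_eq_left)
  qed
  finally show "measure M {\<omega>\<in>space M. \<bar>\<Sum>i=1..K-1. X i \<omega>\<bar> \<ge> A} \<le> (1 + 2 * L) * real K / (r * A powr (1 - r))"
    unfolding S_def I_def .
qed

end
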